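(* Let $(c_n)_{n\in\mathbb{Z}}$ be real numbers with $\sum_{n\in\mathbb{Z}}n^2c_n^2<\infty$, and for $j\in\{0,1,2\}$ let $g_j(\theta)=\sum_{n\in\mathbb{Z}}n^jc_n^2e^{in\theta}$, $g=g_0$. Then for every $\theta\in\mathbb{R}$, \[ |g(0)g_1(\theta)-g_1(0)g(\theta)|^2\le\left(g(0)g_2(0)-g_1^2(0)\right)\left(g^2(0)-|g(\theta)|^2\right). \] *)

theory Defs
  imports "HOL-Analysis.Analysis"
begin

definition gj :: "nat \<Rightarrow> (int \<Rightarrow> real) \<Rightarrow> real \<Rightarrow> complex" where
  "gj j c \<theta> = (\<Sum>\<^sub>\<infinity>n\<in>(UNIV::int set).
      complex_of_real ((real_of_int n) ^ j * (c n)^2) * cis (real_of_int n * \<theta>))"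

end

theory Submission imports Defs begin
lemma sumw:
  fixes w :: "int \<Rightarrow> real"
  assumes nn: "\<And>n. w n \<ge> 0" and s2: "(\<lambda>n. (real_of_int n)^2 * w n) summable_on UNIV"
  shows "w summable_on UNIV" "(\<lambda>n. real_of_int n * w n) summable_on UNIV"
proof -
  have "(\<lambda>n. (real_of_int n)^2 * w n) summable_on (UNIV - {0})"
    by (rule summable_on_subset_banach[OF s2]) auto
  then have "w summable_on (UNIV - {0})"
  proof (rule summable_on_comparison_test)
    fix n :: int assume "n \<in> UNIV - {0}"
    then have "1 \<le> (real_of_int n)^2"
      by (smt (verit, ccfv_SIG) of_int_1 of_int_power_le_of_int_cancel_iff zero_less_power2 DiffD2 singletonI)
    then show "w n \<le> (real_of_int n)^2 * w n" using nn[of n] by (metis mult_le_cancel_right1 not_le)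
    show "0 \<le> w n" by (rule nn)
  qed
  then have "w summable_on insert 0 (UNIV - {0})" by (simp only: summable_on_insert_iff)
  then show "w summable_on UNIV" by (metis insert_Diff_single insert_UNIV)
  have "(\<lambda>n. norm (real_of_int n * w n)) summable_on UNIV"
  proof (rule summable_on_comparison_test)
    show "(\<lambda>n. norm ((real_of_int n)^2 * w n)) summable_on UNIV"
      using s2 nn by (simp add: abs_mult)
    fix n :: int
    show "0 \<le> norm (real_of_int n * w n)" by simp
    have "\<bar>real_of_int n\<bar> \<le> (real_of_int n)^2"
    proof (cases "n = 0")
      case False
      then have "1 \<le> \<bar>real_of_int n\<bar>" by linarith
      then have "\<bar>real_of_int n\<bar> * 1 \<le> \<bar>real_of_int n\<bar> * \<bar>real_of_int n\<bar>"
        by (intro mult_left_mono) auto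
      then show ?thesis by (simp add: power2_eq_square abs_mult_self_eq)
    qed simp
    then show "norm (real_of_int n * w n) \<le> norm ((real_of_int n)^2 * w n)"
      using nn[of n] by (simp add: abs_mult mult_right_mono)
  qed
  then show "(\<lambda>n. real_of_int n * w n) summable_on UNIV" by (rule abs_summable_summable)
qed
lemma cplx_hs:
  fixes f :: "int \<Rightarrow> real"
  assumes "f summable_on UNIV"
  shows "((\<lambda>n. complex_of_real (f n) * cis (real_of_int n * \<theta>)) has_sum
           (\<Sum>\<^sub>\<infinity>n\<in>UNIV. complex_of_real (f n) * cis (real_of_int n * \<theta>))) UNIV"
proof -
  have "(\<lambda>n. norm (f n)) summable_on UNIV"
    using assms summable_on_iff_abs_summable_on_real by blast
  moreover have "(\<lambda>n. norm (complex_of_real (f n) * cis (real_of_int n * \<theta>))) = (\<lambda>n. norm (f n))"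
    by (rule ext) (simp add: norm_mult)
  ultimately have "(\<lambda>n. norm (complex_of_real (f n) * cis (real_of_int n * \<theta>))) summable_on UNIV"
    by simp
  then have "(\<lambda>n. complex_of_real (f n) * cis (real_of_int n * \<theta>)) summable_on UNIV"
    by (rule abs_summable_summable)
  then show ?thesis by simp
qed

lemma cplx_zero:
  fixes f :: "int \<Rightarrow> real"
  assumes "(f has_sum S) UNIV"
  shows "(\<Sum>\<^sub>\<infinity>n\<in>UNIV. complex_of_real (f n) * cis (real_of_int n * 0)) = complex_of_real S"
  using has_sum_of_real[OF assms, where 'a=complex] by (simp add: infsumI)

lemma hs_diff:
  fixes f g :: "'a \<Rightarrow> complex"
  assumes "(f has_sum a) A" "(g has_sum b) A"
  shows "((\<lambda>x. f x - g x) has_sum (a - b)) A"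
  using has_sum_add[OF assms(1) has_sum_uminusI[OF assms(2)]] by simp

lemma alg1:
  fixes W Ar X Xc Dv Av E Ec Gv Gc :: complex
  assumes "E * Ec = 1"
  shows "W * ((Ar*X - Dv*(Av*E - Gv)) * (Ar*Xc - Dv*(Av*Ec - Gc))) =
     X * Xc * (W * Ar^2) - Dv * X * Av * ((W * Ar) * Ec) + Dv * X * Gc * (W * Ar)
     - Dv * Xc * Av * ((W * Ar) * E) + Dv * Xc * Gv * (W * Ar)
     + Dv^2 * (Av^2 * W - Av * Gc * (W * E) - Av * Gv * (W * Ec) + Gv * Gc * W)"
proof -
  have "W * ((Ar*X - Dv*(Av*E - Gv)) * (Ar*Xc - Dv*(Av*Ec - Gc))) =
     X * Xc * (W * Ar^2) - Dv * X * Av * ((W * Ar) * Ec) + Dv * X * Gc * (W * Ar)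
     - Dv * Xc * Av * ((W * Ar) * E) + Dv * Xc * Gv * (W * Ar)
     + Dv^2 * (Av^2 * W * (E * Ec) - Av * Gc * (W * E) - Av * Gv * (W * Ec) + Gv * Gc * W)"
    by (simp add: algebra_simps power2_eq_square)
  then show ?thesis using assms by simp
qed

theorem claim5p2:
  fixes c :: "int \<Rightarrow> real" and \<theta> :: real
  assumes "(\<lambda>n::int. (real_of_int n)^2 * (c n)^2) summable_on UNIV"
  shows "(cmod (gj 0 c 0 * gj 1 c \<theta> - gj 1 c 0 * gj 0 c \<theta>))^2
     \<le> (Re (gj 0 c 0) * Re (gj 2 c 0) - (Re (gj 1 c 0))^2)
        * ((Re (gj 0 c 0))^2 - (cmod (gj 0 c \<theta>))^2)"
proof -
  define w where "w = (\<lambda>n. (c n)^2)"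
  have nn: "\<And>n. w n \<ge> 0" by (simp add: w_def)
  have s2: "(\<lambda>n. (real_of_int n)^2 * w n) summable_on UNIV" using assms by (simp add: w_def)
  note s01 = sumw[OF nn s2]
  define A where "A = (\<Sum>\<^sub>\<infinity>n\<in>UNIV. w n)"
  define B where "B = (\<Sum>\<^sub>\<infinity>n\<in>UNIV. real_of_int n * w n)"
  define C where "C = (\<Sum>\<^sub>\<infinity>n\<in>UNIV. (real_of_int n)^2 * w n)"
  have hA: "(w has_sum A) UNIV" using s01(1) A_def by simp
  have hB: "((\<lambda>n. real_of_int n * w n) has_sum B) UNIV" using s01(2) B_def by simp
  have hC: "((\<lambda>n. (real_of_int n)^2 * w n) has_sum C) UNIV" using s2 C_def by simp
  define G where "G = gj 0 c \<theta>"
  define G1 where "G1 = gj 1 c \<theta>"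
  define e where "e = (\<lambda>n::int. cis (real_of_int n * \<theta>))"
  have g00: "gj 0 c 0 = complex_of_real A"
    using cplx_zero[OF hA] by (simp add: gj_def w_def)
  have g10: "gj 1 c 0 = complex_of_real B"
    using cplx_zero[OF hB] by (simp add: gj_def w_def)
  have g20: "gj 2 c 0 = complex_of_real C"
    using cplx_zero[OF hC] by (simp add: gj_def w_def)
  have hG: "((\<lambda>n. complex_of_real (w n) * e n) has_sum G) UNIV"
    using cplx_hs[OF s01(1), of \<theta>] by (simp add: G_def gj_def w_def e_def)
  have hG1: "((\<lambda>n. complex_of_real (real_of_int n * w n) * e n) has_sum G1) UNIV"
    using cplx_hs[OF s01(2), of \<theta>] by (simp add: G1_def gj_def w_def e_def)
  have hGc: "((\<lambda>n. complex_of_real (w n) * cnj (e n)) has_sum cnj G) UNIV"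
    using hG by (subst has_sum_cnj_iff[symmetric]) simp
  define D where "D = A * C - B^2"
  define a where "a = (\<lambda>n. A * real_of_int n - B)"
  define X0 where "X0 = complex_of_real A * G1 - complex_of_real B * G"
  have Wa: "((\<lambda>n. w n * a n) has_sum 0) UNIV"
  proof -
    have "((\<lambda>n. A * (real_of_int n * w n) + (- B) * w n) has_sum (A * B + (- B) * A)) UNIV"
      by (intro has_sum_add has_sum_cmult_right hA hB)
    then show ?thesis by (simp add: a_def algebra_simps)
  qed
  have Wa2: "((\<lambda>n. w n * (a n)^2) has_sum (A * D)) UNIV"
  proof -
    have "((\<lambda>n. A^2 * ((real_of_int n)^2 * w n) + (- 2 * A * B) * (real_of_int n * w n) + B^2 * w n)
        has_sum (A^2 * C + (- 2 * A * B) * B + B^2 * A)) UNIV"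
      by (intro has_sum_add has_sum_cmult_right hA hB hC)
    moreover have "A^2 * C + (- 2 * A * B) * B + B^2 * A = A * D"
      by (simp add: D_def power2_eq_square algebra_simps)
    ultimately show ?thesis by (simp add: a_def power2_eq_square algebra_simps)
  qed
  have Wae: "((\<lambda>n. complex_of_real (w n * a n) * e n) has_sum X0) UNIV"
  proof -
    have "((\<lambda>n. complex_of_real A * (complex_of_real (real_of_int n * w n) * e n)
         + (- complex_of_real B) * (complex_of_real (w n) * e n))
        has_sum (complex_of_real A * G1 + (- complex_of_real B) * G)) UNIV"
      by (intro has_sum_add has_sum_cmult_right hG hG1)
    then show ?thesis by (simp add: a_def X0_def algebra_simps)
  qed
  have Waec: "((\<lambda>n. complex_of_real (w n * a n) * cnj (e n)) has_sum cnj X0) UNIV"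
    using Wae by (subst has_sum_cnj_iff[symmetric]) simp
  have cWa: "((\<lambda>n. complex_of_real (w n * a n)) has_sum 0) UNIV"
    using has_sum_of_real[OF Wa, where 'a=complex] by simp
  have cWa2: "((\<lambda>n. complex_of_real (w n * (a n)^2)) has_sum complex_of_real (A * D)) UNIV"
    using has_sum_of_real[OF Wa2, where 'a=complex] by simp
  have cA: "((\<lambda>n. complex_of_real (w n)) has_sum complex_of_real A) UNIV"
    using has_sum_of_real[OF hA, where 'a=complex] by simp
  have ee: "\<And>n. e n * cnj (e n) = 1"
    by (simp add: e_def cis_cnj cis_mult)
  define v where "v = (\<lambda>n. complex_of_real (a n) * X0 - complex_of_real D * (complex_of_real A * e n - G))"
  define V where "V = X0 * cnj X0 * complex_of_real (A * D) - complex_of_real D * X0 * complex_of_real A * cnj X0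
     + complex_of_real D * X0 * cnj G * 0 - complex_of_real D * cnj X0 * complex_of_real A * X0
     + complex_of_real D * cnj X0 * G * 0
     + (complex_of_real D)^2 * ((complex_of_real A)^2 * complex_of_real A - complex_of_real A * cnj G * G
        - complex_of_real A * G * cnj G + G * cnj G * complex_of_real A)"
  have hV: "((\<lambda>n. complex_of_real (w n * (cmod (v n))^2)) has_sum V) UNIV"
  proof -
    have "((\<lambda>n. X0 * cnj X0 * complex_of_real (w n * (a n)^2)
          - complex_of_real D * X0 * complex_of_real A * (complex_of_real (w n * a n) * cnj (e n))
          + complex_of_real D * X0 * cnj G * complex_of_real (w n * a n)
          - complex_of_real D * cnj X0 * complex_of_real A * (complex_of_real (w n * a n) * e n)
          + complex_of_real D * cnj X0 * G * complex_of_real (w n * a n)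
          + (complex_of_real D)^2 * ((complex_of_real A)^2 * complex_of_real (w n)
             - complex_of_real A * cnj G * (complex_of_real (w n) * e n)
             - complex_of_real A * G * (complex_of_real (w n) * cnj (e n))
             + G * cnj G * complex_of_real (w n))) has_sum V) UNIV"
      unfolding V_def
      by (intro has_sum_add hs_diff has_sum_cmult_right cWa cWa2 cA Wae Waec hG hGc)
    moreover have "complex_of_real (w n * (cmod (v n))^2) =
          X0 * cnj X0 * complex_of_real (w n * (a n)^2)
          - complex_of_real D * X0 * complex_of_real A * (complex_of_real (w n * a n) * cnj (e n))
          + complex_of_real D * X0 * cnj G * complex_of_real (w n * a n)
          - complex_of_real D * cnj X0 * complex_of_real A * (complex_of_real (w n * a n) * e n)
          + complex_of_real D * cnj X0 * G * complex_of_real (w n * a n)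
          + (complex_of_real D)^2 * ((complex_of_real A)^2 * complex_of_real (w n)
             - complex_of_real A * cnj G * (complex_of_real (w n) * e n)
             - complex_of_real A * G * (complex_of_real (w n) * cnj (e n))
             + G * cnj G * complex_of_real (w n))" for n
    proof -
      have "complex_of_real (w n * (cmod (v n))^2) = complex_of_real (w n) *
         ((complex_of_real (a n) * X0 - complex_of_real D * (complex_of_real A * e n - G)) *
          (complex_of_real (a n) * cnj X0 - complex_of_real D * (complex_of_real A * cnj (e n) - cnj G)))"
        by (simp only: of_real_mult complex_norm_square v_def complex_cnj_diff complex_cnj_mult complex_cnj_complex_of_real)
      also have "\<dots> = X0 * cnj X0 * (complex_of_real (w n) * (complex_of_real (a n))^2)
          - complex_of_real D * X0 * complex_of_real A * ((complex_of_real (w n) * complex_of_real (a n)) * cnj (e n))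
          + complex_of_real D * X0 * cnj G * (complex_of_real (w n) * complex_of_real (a n))
          - complex_of_real D * cnj X0 * complex_of_real A * ((complex_of_real (w n) * complex_of_real (a n)) * e n)
          + complex_of_real D * cnj X0 * G * (complex_of_real (w n) * complex_of_real (a n))
          + (complex_of_real D)^2 * ((complex_of_real A)^2 * complex_of_real (w n)
             - complex_of_real A * cnj G * (complex_of_real (w n) * e n)
             - complex_of_real A * G * (complex_of_real (w n) * cnj (e n))
             + G * cnj G * complex_of_real (w n))"
        by (rule alg1[OF ee])
      finally show ?thesis by (simp only: of_real_mult of_real_power)
    qed
    ultimately show ?thesis by simp
  qed
  have "((\<lambda>n. Re (complex_of_real (w n * (cmod (v n))^2))) has_sum Re V) UNIV"
    by (rule has_sum_bounded_linear[OF bounded_linear_Re hV])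
  then have ReV: "Re V \<ge> 0"
    by (rule has_sum_nonneg) (simp add: nn)
  have nG: "G * cnj G = (complex_of_real (cmod G))^2" by (metis complex_norm_square of_real_power)
  have nX: "X0 * cnj X0 = (complex_of_real (cmod X0))^2" by (metis complex_norm_square of_real_power)
  have "V = complex_of_real A * complex_of_real D * (complex_of_real D * ((complex_of_real A)^2 - G * cnj G) - X0 * cnj X0)"
    unfolding V_def of_real_mult by algebra
  also have "\<dots> = complex_of_real (A * D * (D * (A^2 - (cmod G)^2) - (cmod X0)^2))"
    by (simp only: nG nX of_real_mult of_real_diff of_real_power)
  finally have "A * D * (D * (A^2 - (cmod G)^2) - (cmod X0)^2) \<ge> 0" using ReV by simp
  note main = this
  have AD: "A * D \<ge> 0" using Wa2 by (rule has_sum_nonneg) (simp add: nn)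
  have goal: "(cmod X0)^2 \<le> D * (A^2 - (cmod G)^2)"
  proof (cases "A = 0")
    case True
    then have w0: "w n = 0" for n
      using nonneg_has_sum_le_0D[OF hA] nn by auto
    have "B = 0" using has_sum_unique[OF hB has_sum_0] w0 by auto
    moreover have "G = 0" using has_sum_unique[OF hG has_sum_0] w0 by auto
    ultimately show ?thesis using True by (simp add: X0_def D_def)
  next
    case False
    then have Apos: "A > 0" using hA nn by (metis has_sum_nonneg order_less_le)
    then have "D \<ge> 0" using AD by (simp add: zero_le_mult_iff)
    show ?thesis
    proof (cases "D = 0")
      case True
      then have "w n * (a n)^2 = 0" for n
        using nonneg_has_sum_le_0D[OF Wa2] nn by auto
      then have "complex_of_real (w n * a n) * e n = 0" for n
        by (simp add: power2_eq_square)
      then have "X0 = 0" using has_sum_unique[OF Wae has_sum_0] by auto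
      then show ?thesis using True by simp
    next
      case False
      with \<open>D \<ge> 0\<close> have "A * D > 0" using Apos by simp
      with main show ?thesis by (simp add: zero_le_mult_iff)
    qed
  qed
  show ?thesis
    unfolding g00 g10 g20 G_def[symmetric] G1_def[symmetric]
    using goal by (simp add: X0_def D_def)
qed

end
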